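(* Let $\Gamma$ be the group generated by the super-Apollonian group $\mathcal A^S$, the $4\times4$ permutation matrices, and $\pm I$, and let $\tilde\Gamma=\langle\Gamma,D\rangle$ with $D=\frac12\begin{pmatrix}-1&1&1&1\\1&-1&1&1\\1&1&-1&1\\1&1&1&-1\end{pmatrix}$. Then $\tilde\Gamma=J_0\,O(3,1;\mathbb Z)\,J_0^{-1}$, where $J_0=\frac12\begin{pmatrix}1&1&1&1\\1&1&-1&-1\\1&-1&1&-1\\1&-1&-1&1\end{pmatrix}$.
   Context: Let $S_i$ ($i=1,\dots,4$) be the $4\times4$ integer matrix equal to the identity except that row $i$ has $-1$ in position $i$ and $2$ in the other three positions, and $S_i^\perp=S_i^T$; the super-Apollonian group is $\mathcal A^S=\langle S_1,\dots,S_4,S_1^\perp,\dots,S_4^\perp\rangle$. Let $Q_L=\mathrm{diag}(-1,1,1,1)$ and $O(3,1;\mathbb Z)=\{U\in M_4(\mathbb Z):U^TQ_LU=Q_L\}$. *)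

theory Defs
  imports "Jordan_Normal_Form.Matrix" "HOL-Combinatorics.Permutations"
begin

text \<open>All matrices are 4x4 matrices over the rationals (integer matrices are embedded).
Indices are 0-based: index i here corresponds to index i+1 in the paper.\<close>

definition S_mat :: "nat \<Rightarrow> rat mat" where
  "S_mat i = mat 4 4 (\<lambda>(r, c). if r = i then (if c = i then -1 else 2)
                               else if r = c then 1 else 0)"

definition S_perp :: "nat \<Rightarrow> rat mat" where
  "S_perp i = transpose_mat (S_mat i)"

definition perm_mat :: "(nat \<Rightarrow> nat) \<Rightarrow> rat mat" where
  "perm_mat p = mat 4 4 (\<lambda>(r, c). if p r = c then 1 else 0)"

definition D_mat :: "rat mat" where
  "D_mat = mat 4 4 (\<lambda>(r, c). if r = c then -1/2 else 1/2)"

definition J0 :: "rat mat" where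
  "J0 = mat_of_rows_list 4
     [[1/2, 1/2, 1/2, 1/2],
      [1/2, 1/2, -1/2, -1/2],
      [1/2, -1/2, 1/2, -1/2],
      [1/2, -1/2, -1/2, 1/2]]"

definition J0_inv :: "rat mat" where
  "J0_inv = (THE B. B \<in> carrier_mat 4 4 \<and> J0 * B = 1\<^sub>m 4 \<and> B * J0 = 1\<^sub>m 4)"

definition Q_L :: "rat mat" where
  "Q_L = mat 4 4 (\<lambda>(r, c). if r = c then (if r = 0 then -1 else 1) else 0)"

definition O31Z :: "rat mat set" where
  "O31Z = {U \<in> carrier_mat 4 4. (\<forall>r<4. \<forall>c<4. U $$ (r, c) \<in> \<int>) \<and>
                                transpose_mat U * Q_L * U = Q_L}"

inductive_set gen_grp :: "rat mat set \<Rightarrow> rat mat set" for G where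
  one: "1\<^sub>m 4 \<in> gen_grp G"
| gen: "g \<in> G \<Longrightarrow> g \<in> gen_grp G"
| mult: "A \<in> gen_grp G \<Longrightarrow> B \<in> gen_grp G \<Longrightarrow> A * B \<in> gen_grp G"
| inv: "A \<in> gen_grp G \<Longrightarrow> B \<in> carrier_mat 4 4 \<Longrightarrow> A * B = 1\<^sub>m 4 \<Longrightarrow> B \<in> gen_grp G"

definition superApollonian :: "rat mat set" where
  "superApollonian = gen_grp ({S_mat i | i. i < 4} \<union> {S_perp i | i. i < 4})"

definition Gamma :: "rat mat set" where
  "Gamma = gen_grp (superApollonian \<union> {perm_mat p | p. p permutes {..<4}}
                    \<union> {1\<^sub>m 4, - 1\<^sub>m 4})"

definition Gamma_tilde :: "rat mat set" where
  "Gamma_tilde = gen_grp (Gamma \<union> {D_mat})"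

end

theory Submission
  imports Defs Jordan_Normal_Form.Determinant
begin


definition m4 :: "rat list list \<Rightarrow> rat mat" where
  "m4 xs = mat 4 4 (\<lambda>(i,j). xs ! i ! j)"

lemma less4: "(i::nat) < 4 \<longleftrightarrow> i = 0 \<or> i = 1 \<or> i = 2 \<or> i = 3" by auto

lemma mult4: "dim_row A = 4 \<Longrightarrow> dim_col A = 4 \<Longrightarrow> dim_row B = 4 \<Longrightarrow> dim_col B = 4 \<Longrightarrow>
  i < 4 \<Longrightarrow> j < 4 \<Longrightarrow>
  (A * B) $$ (i,j) = A$$(i,0)*B$$(0,j) + A$$(i,1)*B$$(1,j) + A$$(i,2)*B$$(2,j) + A$$(i,3)*B$$(3,j)"
  by (simp add: scalar_prod_def numeral_eq_Suc)

lemma eq4I: "dim_row A = 4 \<Longrightarrow> dim_col A = 4 \<Longrightarrow> dim_row B = 4 \<Longrightarrow> dim_col B = 4 \<Longrightarrow>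
  (\<forall>i\<in>{0,1,2,3}. \<forall>j\<in>{0,1,2,3}. A$$(i,j) = B$$(i,j)) \<Longrightarrow> A = B"
  by (rule eq_matI) (auto simp: less4)

lemma J0_m4: "J0 = m4 [[1/2, 1/2, 1/2, 1/2], [1/2, 1/2, -1/2, -1/2], [1/2, -1/2, 1/2, -1/2], [1/2, -1/2, -1/2, 1/2]]"
  unfolding J0_def m4_def mat_of_rows_list_def by (simp add: numeral_eq_Suc)

lemma m4_carrier[simp]: "m4 xs \<in> carrier_mat 4 4" "dim_row (m4 xs) = 4" "dim_col (m4 xs) = 4"
  by (auto simp: m4_def)

lemma m4_index[simp]: "i < 4 \<Longrightarrow> j < 4 \<Longrightarrow> m4 xs $$ (i,j) = xs ! i ! j"
  by (simp add: m4_def)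

lemma J0_carrier[simp]: "J0 \<in> carrier_mat 4 4" "dim_row J0 = 4" "dim_col J0 = 4"
  by (auto simp: J0_m4)

lemma QL_m4: "Q_L = m4 [[-1,0,0,0],[0,1,0,0],[0,0,1,0],[0,0,0,1]]"
  unfolding Q_L_def m4_def by (rule eq_matI) (auto simp: less4)

lemma QL_carrier[simp]: "Q_L \<in> carrier_mat 4 4" "dim_row Q_L = 4" "dim_col Q_L = 4"
  by (auto simp: QL_m4)

lemmas msimps = mult4 eq4I

lemma J0_sq: "J0 * J0 = 1\<^sub>m 4"
  unfolding J0_m4 by (rule eq4I) (simp_all del: index_mult_mat(1) add: mult4)

lemma QL_sq: "Q_L * Q_L = 1\<^sub>m 4"
  unfolding QL_m4 by (rule eq4I) (simp_all del: index_mult_mat(1) add: mult4)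

lemma QL_tr: "transpose_mat Q_L = Q_L"
  unfolding QL_m4 by (rule eq4I) (simp_all del: index_mult_mat(1) add: mult4)

lemma mult4c[simp]: "A \<in> carrier_mat 4 4 \<Longrightarrow> B \<in> carrier_mat 4 4 \<Longrightarrow> A * B \<in> carrier_mat 4 4"
  by auto

lemma tr4c[simp]: "A \<in> carrier_mat 4 4 \<Longrightarrow> transpose_mat A \<in> carrier_mat 4 4"
  by auto

lemma c4D[simp]: "A \<in> carrier_mat 4 4 \<Longrightarrow> dim_row A = 4" "A \<in> carrier_mat 4 4 \<Longrightarrow> dim_col A = 4"
  by auto

lemmas assoc4 = assoc_mult_mat[of _ 4 4 _ 4 _ 4]

lemma J0_sq': "X \<in> carrier_mat 4 4 \<Longrightarrow> J0 * (J0 * X) = X"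
  by (simp del: assoc_mult_mat add: assoc4[symmetric] J0_sq)

lemma QL_sq': "X \<in> carrier_mat 4 4 \<Longrightarrow> Q_L * (Q_L * X) = X"
  by (simp del: assoc_mult_mat add: assoc4[symmetric] QL_sq)

lemmas cd = assoc4 J0_sq' QL_sq' J0_sq QL_sq

lemma J0_inv_eq: "J0_inv = J0"
  unfolding J0_inv_def
proof (rule the_equality)
  show "J0 \<in> carrier_mat 4 4 \<and> J0 * J0 = 1\<^sub>m 4 \<and> J0 * J0 = 1\<^sub>m 4" using J0_sq by simp
next
  fix B assume B: "B \<in> carrier_mat 4 4 \<and> J0 * B = 1\<^sub>m 4 \<and> B * J0 = 1\<^sub>m 4"
  have "B = J0 * (J0 * B)" using B J0_sq'[of B] by argo
  also have "\<dots> = J0" using B by simp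
  finally show "B = J0" .
qed

definition intm :: "rat mat \<Rightarrow> bool" where
  "intm A \<longleftrightarrow> (\<forall>r<4. \<forall>c<4. A $$ (r, c) \<in> \<int>)"

lemma intm_mult: "A \<in> carrier_mat 4 4 \<Longrightarrow> B \<in> carrier_mat 4 4 \<Longrightarrow> intm A \<Longrightarrow> intm B \<Longrightarrow> intm (A * B)"
  unfolding intm_def by (auto simp del: index_mult_mat(1) simp add: mult4 intro!: Ints_add Ints_mult)

lemma intm_tr: "A \<in> carrier_mat 4 4 \<Longrightarrow> intm A \<Longrightarrow> intm (transpose_mat A)"
  unfolding intm_def by auto

lemma intm_m4I: "(\<forall>i\<in>{0,1,2,3}. \<forall>j\<in>{0,1,2,3}. xs ! i ! j \<in> \<int>) \<Longrightarrow> intm (m4 xs)"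
  unfolding intm_def by (auto simp: less4)

lemma intm_QL: "intm Q_L"
  unfolding QL_m4 by (rule intm_m4I) simp

lemma O31Z_iff: "U \<in> O31Z \<longleftrightarrow> U \<in> carrier_mat 4 4 \<and> intm U \<and> transpose_mat U * Q_L * U = Q_L"
  unfolding O31Z_def intm_def by auto

lemma ortho_entry: "U \<in> carrier_mat 4 4 \<Longrightarrow> i < 4 \<Longrightarrow> j < 4 \<Longrightarrow>
  (transpose_mat U * Q_L * U) $$ (i,j) = - U$$(0,i)*U$$(0,j) + U$$(1,i)*U$$(1,j) + U$$(2,i)*U$$(2,j) + U$$(3,i)*U$$(3,j)"
  unfolding QL_m4 by (simp del: index_mult_mat(1) add: mult4)

lemma O31Z_mult: assumes U: "U \<in> O31Z" and V: "V \<in> O31Z" shows "U * V \<in> O31Z"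
proof -
  have Uc: "U \<in> carrier_mat 4 4" and Vc: "V \<in> carrier_mat 4 4" using U V by (auto simp: O31Z_iff)
  have "transpose_mat (U * V) * Q_L * (U * V) = transpose_mat V * (transpose_mat U * Q_L * U) * V"
    using Uc Vc by (simp del: assoc_mult_mat add: transpose_mult[OF Uc Vc] cd)
  also have "\<dots> = Q_L" using U V by (simp add: O31Z_iff)
  finally show ?thesis using U V Uc Vc by (auto simp: O31Z_iff intro: intm_mult)
qed

lemma O31Z_one: "1\<^sub>m 4 \<in> O31Z"
  by (simp add: O31Z_iff intm_def QL_tr)

lemma O31Z_inv: assumes U: "U \<in> O31Z" and V: "V \<in> carrier_mat 4 4" and UV: "U * V = 1\<^sub>m 4"
  shows "V \<in> O31Z"
proof -
  have Uc: "U \<in> carrier_mat 4 4" and UQ: "transpose_mat U * Q_L * U = Q_L" and Ui: "intm U"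
    using U by (auto simp: O31Z_iff)
  let ?L = "Q_L * transpose_mat U * Q_L"
  have "?L * U = Q_L * (transpose_mat U * Q_L * U)"
    using Uc by (simp del: assoc_mult_mat add: cd)
  also have "\<dots> = 1\<^sub>m 4" using UQ QL_sq by simp
  finally have LU: "?L * U = 1\<^sub>m 4" .
  have "V = (?L * U) * V" using LU V by simp
  also have "\<dots> = ?L * (U * V)" using Uc V by (simp del: assoc_mult_mat add: cd)
  also have "\<dots> = ?L" using UV Uc by simp
  finally have VL: "V = ?L" .
  have iV: "intm V" unfolding VL using Uc Ui
    by (intro intm_mult intm_tr intm_QL) (auto)
  have "Q_L = transpose_mat (U * V) * Q_L * (U * V)" using UV QL_tr by simp
  also have "\<dots> = transpose_mat V * (transpose_mat U * Q_L * U) * V"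
    using Uc V by (simp del: assoc_mult_mat add: transpose_mult[OF Uc V] cd)
  also have "\<dots> = transpose_mat V * Q_L * V" using UQ by simp
  finally show ?thesis using V iV by (simp add: O31Z_iff)
qed

definition Tset :: "rat mat set" where
  "Tset = {J0 * U * J0 | U. U \<in> O31Z}"

lemma J0_conj_conj: "M \<in> carrier_mat 4 4 \<Longrightarrow> J0 * (J0 * M * J0) * J0 = M"
  by (simp del: assoc_mult_mat add: cd)

lemma memT: "M \<in> carrier_mat 4 4 \<Longrightarrow> J0 * M * J0 = U \<Longrightarrow> U \<in> O31Z \<Longrightarrow> M \<in> Tset"
  unfolding Tset_def using J0_conj_conj by (metis (mono_tags, lifting) mem_Collect_eq)

lemma Tset_carrier: "A \<in> Tset \<Longrightarrow> A \<in> carrier_mat 4 4"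
  unfolding Tset_def O31Z_def by auto

lemma Tset_one: "1\<^sub>m 4 \<in> Tset"
  by (rule memT[OF _ _ O31Z_one]) (auto simp: J0_sq)

lemma Tset_mult: assumes A: "A \<in> Tset" and B: "B \<in> Tset" shows "A * B \<in> Tset"
proof -
  obtain U where U: "U \<in> O31Z" "A = J0 * U * J0" using A unfolding Tset_def by auto
  obtain V where V: "V \<in> O31Z" "B = J0 * V * J0" using B unfolding Tset_def by auto
  have Uc: "U \<in> carrier_mat 4 4" and Vc: "V \<in> carrier_mat 4 4" using U V by (auto simp: O31Z_iff)
  have "A * B = J0 * U * (J0 * J0) * V * J0"
    using Uc Vc U V by (simp del: assoc_mult_mat add: cd)
  also have "\<dots> = J0 * (U * V) * J0" using Uc Vc by (simp del: assoc_mult_mat add: cd)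
  finally show ?thesis unfolding Tset_def using O31Z_mult[OF U(1) V(1)] by auto
qed

lemma Tset_inv: assumes A: "A \<in> Tset" and B: "B \<in> carrier_mat 4 4" and AB: "A * B = 1\<^sub>m 4"
  shows "B \<in> Tset"
proof -
  obtain U where U: "U \<in> O31Z" "A = J0 * U * J0" using A unfolding Tset_def by auto
  have Uc: "U \<in> carrier_mat 4 4" using U by (auto simp: O31Z_iff)
  have "U * (J0 * B * J0) = J0 * (J0 * U * J0 * B) * J0"
    using Uc B by (simp del: assoc_mult_mat add: cd)
  also have "\<dots> = 1\<^sub>m 4" using AB U by (simp add: J0_sq)
  finally have "J0 * B * J0 \<in> O31Z" using O31Z_inv[OF U(1)] B by simp
  then show ?thesis using memT B by blast
qed

lemma gen_grp_sub: "G \<subseteq> Tset \<Longrightarrow> gen_grp G \<subseteq> Tset"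
proof
  fix x assume G: "G \<subseteq> Tset" and x: "x \<in> gen_grp G"
  from x show "x \<in> Tset" using G
    by (induction rule: gen_grp.induct) (auto intro: Tset_one Tset_mult Tset_inv)
qed

lemma memT_m4: "M \<in> carrier_mat 4 4 \<Longrightarrow> J0 * M * J0 = m4 xs \<Longrightarrow>
  (\<forall>i\<in>{0,1,2,3}. \<forall>j\<in>{0,1,2,3}. xs ! i ! j \<in> \<int>) \<Longrightarrow>
  transpose_mat (m4 xs) * Q_L * m4 xs = Q_L \<Longrightarrow> M \<in> Tset"
  by (rule memT[of M "m4 xs"]) (auto simp: O31Z_iff intro: intm_m4I)

lemma S0_T: "S_mat 0 \<in> Tset"
  apply (rule memT_m4[where xs="[[2, -1, -1, -1], [1, 0, -1, -1], [1, -1, 0, -1], [1, -1, -1, 0]]"])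
     apply (simp add: S_mat_def)
    apply (unfold J0_m4, rule eq4I; simp del: index_mult_mat(1) add: mult4 S_mat_def)
   apply simp
  apply (unfold QL_m4, rule eq4I; simp del: index_mult_mat(1) add: mult4)
  done

lemma Sp0_T: "S_perp 0 \<in> Tset"
  apply (rule memT_m4[where xs="[[2, 1, 1, 1], [-1, 0, -1, -1], [-1, -1, 0, -1], [-1, -1, -1, 0]]"])
     apply (simp add: S_perp_def S_mat_def)
    apply (unfold J0_m4, rule eq4I; simp del: index_mult_mat(1) add: mult4 S_perp_def S_mat_def)
   apply simp
  apply (unfold QL_m4, rule eq4I; simp del: index_mult_mat(1) add: mult4)
  done

lemma S1_T: "S_mat 1 \<in> Tset"
  apply (rule memT_m4[where xs="[[2, -1, 1, 1], [1, 0, 1, 1], [-1, 1, 0, -1], [-1, 1, -1, 0]]"])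
     apply (simp add: S_mat_def)
    apply (unfold J0_m4, rule eq4I; simp del: index_mult_mat(1) add: mult4 S_mat_def)
   apply simp
  apply (unfold QL_m4, rule eq4I; simp del: index_mult_mat(1) add: mult4)
  done

lemma Sp1_T: "S_perp 1 \<in> Tset"
  apply (rule memT_m4[where xs="[[2, 1, -1, -1], [-1, 0, 1, 1], [1, 1, 0, -1], [1, 1, -1, 0]]"])
     apply (simp add: S_perp_def S_mat_def)
    apply (unfold J0_m4, rule eq4I; simp del: index_mult_mat(1) add: mult4 S_perp_def S_mat_def)
   apply simp
  apply (unfold QL_m4, rule eq4I; simp del: index_mult_mat(1) add: mult4)
  done

lemma S2_T: "S_mat 2 \<in> Tset"
  apply (rule memT_m4[where xs="[[2, 1, -1, 1], [-1, 0, 1, -1], [1, 1, 0, 1], [-1, -1, 1, 0]]"])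
     apply (simp add: S_mat_def)
    apply (unfold J0_m4, rule eq4I; simp del: index_mult_mat(1) add: mult4 S_mat_def)
   apply simp
  apply (unfold QL_m4, rule eq4I; simp del: index_mult_mat(1) add: mult4)
  done

lemma Sp2_T: "S_perp 2 \<in> Tset"
  apply (rule memT_m4[where xs="[[2, -1, 1, -1], [1, 0, 1, -1], [-1, 1, 0, 1], [1, -1, 1, 0]]"])
     apply (simp add: S_perp_def S_mat_def)
    apply (unfold J0_m4, rule eq4I; simp del: index_mult_mat(1) add: mult4 S_perp_def S_mat_def)
   apply simp
  apply (unfold QL_m4, rule eq4I; simp del: index_mult_mat(1) add: mult4)
  done

lemma S3_T: "S_mat 3 \<in> Tset"
  apply (rule memT_m4[where xs="[[2, 1, 1, -1], [-1, 0, -1, 1], [-1, -1, 0, 1], [1, 1, 1, 0]]"])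
     apply (simp add: S_mat_def)
    apply (unfold J0_m4, rule eq4I; simp del: index_mult_mat(1) add: mult4 S_mat_def)
   apply simp
  apply (unfold QL_m4, rule eq4I; simp del: index_mult_mat(1) add: mult4)
  done

lemma Sp3_T: "S_perp 3 \<in> Tset"
  apply (rule memT_m4[where xs="[[2, -1, -1, 1], [1, 0, -1, 1], [1, -1, 0, 1], [-1, 1, 1, 0]]"])
     apply (simp add: S_perp_def S_mat_def)
    apply (unfold J0_m4, rule eq4I; simp del: index_mult_mat(1) add: mult4 S_perp_def S_mat_def)
   apply simp
  apply (unfold QL_m4, rule eq4I; simp del: index_mult_mat(1) add: mult4)
  done

lemma D_T: "D_mat \<in> Tset"
  apply (rule memT_m4[where xs="[[1, 0, 0, 0], [0, -1, 0, 0], [0, 0, -1, 0], [0, 0, 0, -1]]"])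
     apply (simp add: D_mat_def)
    apply (unfold J0_m4, rule eq4I; simp del: index_mult_mat(1) add: mult4 D_mat_def)
   apply simp
  apply (unfold QL_m4, rule eq4I; simp del: index_mult_mat(1) add: mult4)
  done

lemma one_T: "1\<^sub>m 4 \<in> Tset"
  apply (rule memT_m4[where xs="[[1, 0, 0, 0], [0, 1, 0, 0], [0, 0, 1, 0], [0, 0, 0, 1]]"])
     apply (simp add: )
    apply (unfold J0_m4, rule eq4I; simp del: index_mult_mat(1) add: mult4 )
   apply simp
  apply (unfold QL_m4, rule eq4I; simp del: index_mult_mat(1) add: mult4)
  done

lemma mone_T: "- 1\<^sub>m 4 \<in> Tset"
  apply (rule memT_m4[where xs="[[-1, 0, 0, 0], [0, -1, 0, 0], [0, 0, -1, 0], [0, 0, 0, -1]]"])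
     apply (simp add: )
    apply (unfold J0_m4, rule eq4I; simp del: index_mult_mat(1) add: mult4 )
   apply simp
  apply (unfold QL_m4, rule eq4I; simp del: index_mult_mat(1) add: mult4)
  done

lemma tr01_T: "perm_mat (Transposition.transpose 0 1) \<in> Tset"
  apply (rule memT_m4[where xs="[[1, 0, 0, 0], [0, 1, 0, 0], [0, 0, 0, -1], [0, 0, -1, 0]]"])
     apply (simp add: perm_mat_def Transposition.transpose_def)
    apply (unfold J0_m4, rule eq4I; simp del: index_mult_mat(1) add: mult4 perm_mat_def Transposition.transpose_def)
   apply simp
  apply (unfold QL_m4, rule eq4I; simp del: index_mult_mat(1) add: mult4)
  done

lemma tr02_T: "perm_mat (Transposition.transpose 0 2) \<in> Tset"
  apply (rule memT_m4[where xs="[[1, 0, 0, 0], [0, 0, 0, -1], [0, 0, 1, 0], [0, -1, 0, 0]]"])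
     apply (simp add: perm_mat_def Transposition.transpose_def)
    apply (unfold J0_m4, rule eq4I; simp del: index_mult_mat(1) add: mult4 perm_mat_def Transposition.transpose_def)
   apply simp
  apply (unfold QL_m4, rule eq4I; simp del: index_mult_mat(1) add: mult4)
  done

lemma tr03_T: "perm_mat (Transposition.transpose 0 3) \<in> Tset"
  apply (rule memT_m4[where xs="[[1, 0, 0, 0], [0, 0, -1, 0], [0, -1, 0, 0], [0, 0, 0, 1]]"])
     apply (simp add: perm_mat_def Transposition.transpose_def)
    apply (unfold J0_m4, rule eq4I; simp del: index_mult_mat(1) add: mult4 perm_mat_def Transposition.transpose_def)
   apply simp
  apply (unfold QL_m4, rule eq4I; simp del: index_mult_mat(1) add: mult4)
  done

lemma tr12_T: "perm_mat (Transposition.transpose 1 2) \<in> Tset"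
  apply (rule memT_m4[where xs="[[1, 0, 0, 0], [0, 0, 1, 0], [0, 1, 0, 0], [0, 0, 0, 1]]"])
     apply (simp add: perm_mat_def Transposition.transpose_def)
    apply (unfold J0_m4, rule eq4I; simp del: index_mult_mat(1) add: mult4 perm_mat_def Transposition.transpose_def)
   apply simp
  apply (unfold QL_m4, rule eq4I; simp del: index_mult_mat(1) add: mult4)
  done

lemma tr13_T: "perm_mat (Transposition.transpose 1 3) \<in> Tset"
  apply (rule memT_m4[where xs="[[1, 0, 0, 0], [0, 0, 0, 1], [0, 0, 1, 0], [0, 1, 0, 0]]"])
     apply (simp add: perm_mat_def Transposition.transpose_def)
    apply (unfold J0_m4, rule eq4I; simp del: index_mult_mat(1) add: mult4 perm_mat_def Transposition.transpose_def)
   apply simp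
  apply (unfold QL_m4, rule eq4I; simp del: index_mult_mat(1) add: mult4)
  done

lemma tr23_T: "perm_mat (Transposition.transpose 2 3) \<in> Tset"
  apply (rule memT_m4[where xs="[[1, 0, 0, 0], [0, 1, 0, 0], [0, 0, 0, 1], [0, 0, 1, 0]]"])
     apply (simp add: perm_mat_def Transposition.transpose_def)
    apply (unfold J0_m4, rule eq4I; simp del: index_mult_mat(1) add: mult4 perm_mat_def Transposition.transpose_def)
   apply simp
  apply (unfold QL_m4, rule eq4I; simp del: index_mult_mat(1) add: mult4)
  done

lemma perm_mat_carrier[simp]: "perm_mat p \<in> carrier_mat 4 4"
  by (simp add: perm_mat_def)

lemma perm_mat_comp: assumes p: "p permutes {..<4}" shows "perm_mat (t \<circ> p) = perm_mat p * perm_mat t"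
proof (rule eq_matI)
  fix i j assume i: "i < dim_row (perm_mat p * perm_mat t)" and j: "j < dim_col (perm_mat p * perm_mat t)"
  then have i4: "i < 4" and j4: "j < 4" by (auto simp: perm_mat_def)
  have "p i < 4" using permutes_in_image[OF p, of i] i4 by auto
  then show "perm_mat (t \<circ> p) $$ (i, j) = (perm_mat p * perm_mat t) $$ (i, j)"
    using i4 j4 by (simp del: index_mult_mat(1) add: mult4, simp add: perm_mat_def less4, auto)
qed (auto simp: perm_mat_def)

lemma tr_T: "a < 4 \<Longrightarrow> b < 4 \<Longrightarrow> a < b \<Longrightarrow> perm_mat (Transposition.transpose a b) \<in> Tset"
  using tr01_T tr02_T tr03_T tr12_T tr13_T tr23_T by (auto simp: less4)

lemma tr_T': "a < 4 \<Longrightarrow> b < 4 \<Longrightarrow> a \<noteq> b \<Longrightarrow> perm_mat (Transposition.transpose a b) \<in> Tset"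
  by (metis tr_T linorder_neqE_nat transpose_commute)

lemma perm_T: assumes "p permutes {..<4}" shows "perm_mat p \<in> Tset"
  using assms finite_lessThan
proof (induction rule: permutes_induct)
  case id
  have "perm_mat id = 1\<^sub>m 4" by (rule eq_matI) (auto simp: perm_mat_def)
  then show ?case using one_T by (simp add: id_def)
next
  case (swap a b p)
  then have "perm_mat (Transposition.transpose a b \<circ> p) = perm_mat p * perm_mat (Transposition.transpose a b)"
    using perm_mat_comp by blast
  moreover have "perm_mat p * perm_mat (Transposition.transpose a b) \<in> Tset"
    using swap tr_T'[of a b] Tset_mult by simp
  ultimately show ?case by (simp add: comp_def)
qed

lemma sub1: "Gamma_tilde \<subseteq> Tset"
proof -
  have "{S_mat i | i. i < 4} \<union> {S_perp i | i. i < 4} \<subseteq> Tset"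
    using S0_T S1_T S2_T S3_T Sp0_T Sp1_T Sp2_T Sp3_T by (auto simp: less4)
  then have "superApollonian \<subseteq> Tset" unfolding superApollonian_def by (rule gen_grp_sub)
  moreover have "{perm_mat p | p. p permutes {..<4}} \<subseteq> Tset" using perm_T by auto
  ultimately have "Gamma \<subseteq> Tset" unfolding Gamma_def using one_T mone_T
    by (intro gen_grp_sub) auto
  then show ?thesis unfolding Gamma_tilde_def using D_T by (intro gen_grp_sub) auto
qed

lemma Gamma_GT: "x \<in> Gamma \<Longrightarrow> x \<in> Gamma_tilde"
  unfolding Gamma_tilde_def by (rule gen_grp.gen) simp

lemma D_GT: "D_mat \<in> Gamma_tilde"
  unfolding Gamma_tilde_def by (rule gen_grp.gen) simp

lemma perm_GT: "p permutes {..<4} \<Longrightarrow> perm_mat p \<in> Gamma_tilde"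
  by (rule Gamma_GT) (unfold Gamma_def, rule gen_grp.gen, blast)

lemma mone_GT: "- 1\<^sub>m 4 \<in> Gamma_tilde"
  by (rule Gamma_GT) (unfold Gamma_def, rule gen_grp.gen, blast)

lemma S0_GT: "S_mat 0 \<in> Gamma_tilde"
proof -
  have "S_mat 0 \<in> superApollonian" unfolding superApollonian_def by (rule gen_grp.gen) auto
  then have "S_mat 0 \<in> Gamma" unfolding Gamma_def by (intro gen_grp.gen) blast
  then show ?thesis by (rule Gamma_GT)
qed

lemma DP_GT: "a < 4 \<Longrightarrow> b < 4 \<Longrightarrow> c < 4 \<Longrightarrow> d < 4 \<Longrightarrow>
  D_mat * perm_mat (Transposition.transpose a b \<circ> Transposition.transpose c d) \<in> Gamma_tilde"
  unfolding Gamma_tilde_def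
  by (rule gen_grp.mult, rule gen_grp.gen, simp, fold Gamma_tilde_def, rule perm_GT,
      intro permutes_compose permutes_swap_id) auto

definition inG :: "rat mat \<Rightarrow> bool" where "inG U \<longleftrightarrow> J0 * U * J0 \<in> Gamma_tilde"

lemma red: assumes g: "g \<in> O31Z" and gg: "g * g = 1\<^sub>m 4" and gG: "J0 * g * J0 \<in> Gamma_tilde"
  and U: "U \<in> O31Z" and gU: "inG (g * U)" shows "inG U"
proof -
  have gc: "g \<in> carrier_mat 4 4" and Uc: "U \<in> carrier_mat 4 4" using g U by (auto simp: O31Z_iff)
  have "(J0 * g * J0) * (J0 * (g * U) * J0) = J0 * ((g * g) * U) * J0"
    using gc Uc by (simp del: assoc_mult_mat add: cd)
  also have "\<dots> = J0 * U * J0" using gg Uc by simp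
  finally show ?thesis using gG gU unfolding inG_def Gamma_tilde_def by (metis gen_grp.mult)
qed

definition negL :: "rat mat" where "negL = m4 [[-1,0,0,0],[0,-1,0,0],[0,0,-1,0],[0,0,0,-1]]"

lemma negL_O: "negL \<in> O31Z"
  unfolding O31Z_iff negL_def
  by (auto intro!: intm_m4I eq4I simp del: index_mult_mat(1) simp add: mult4 QL_m4)

lemma negL_sq: "negL * negL = 1\<^sub>m 4"
  unfolding negL_def by (rule eq4I; simp del: index_mult_mat(1) add: mult4)

lemma negL_G: "J0 * negL * J0 \<in> Gamma_tilde"
proof -
  have "J0 * negL * J0 = - 1\<^sub>m 4"
    unfolding negL_def J0_m4 by (rule eq4I; simp del: index_mult_mat(1) add: mult4 S_mat_def D_mat_def perm_mat_def Transposition.transpose_def)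
  then show ?thesis by (simp add: mone_GT S0_GT DP_GT perm_GT permutes_swap_id)
qed

lemma negL_red: "U \<in> O31Z \<Longrightarrow> inG (negL * U) \<Longrightarrow> inG U"
  by (rule red[OF negL_O negL_sq negL_G])

lemma negL_mult: "U \<in> O31Z \<Longrightarrow> negL * U \<in> O31Z"
  by (rule O31Z_mult[OF negL_O])

definition RL :: "rat mat" where "RL = m4 [[2,-1,-1,-1],[1,0,-1,-1],[1,-1,0,-1],[1,-1,-1,0]]"

lemma RL_O: "RL \<in> O31Z"
  unfolding O31Z_iff RL_def
  by (auto intro!: intm_m4I eq4I simp del: index_mult_mat(1) simp add: mult4 QL_m4)

lemma RL_sq: "RL * RL = 1\<^sub>m 4"
  unfolding RL_def by (rule eq4I; simp del: index_mult_mat(1) add: mult4)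

lemma RL_G: "J0 * RL * J0 \<in> Gamma_tilde"
proof -
  have "J0 * RL * J0 = S_mat 0"
    unfolding RL_def J0_m4 by (rule eq4I; simp del: index_mult_mat(1) add: mult4 S_mat_def D_mat_def perm_mat_def Transposition.transpose_def)
  then show ?thesis by (simp add: mone_GT S0_GT DP_GT perm_GT permutes_swap_id)
qed

lemma RL_red: "U \<in> O31Z \<Longrightarrow> inG (RL * U) \<Longrightarrow> inG U"
  by (rule red[OF RL_O RL_sq RL_G])

lemma RL_mult: "U \<in> O31Z \<Longrightarrow> RL * U \<in> O31Z"
  by (rule O31Z_mult[OF RL_O])

definition N1 :: "rat mat" where "N1 = m4 [[1,0,0,0],[0,-1,0,0],[0,0,1,0],[0,0,0,1]]"

lemma N1_O: "N1 \<in> O31Z"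
  unfolding O31Z_iff N1_def
  by (auto intro!: intm_m4I eq4I simp del: index_mult_mat(1) simp add: mult4 QL_m4)

lemma N1_sq: "N1 * N1 = 1\<^sub>m 4"
  unfolding N1_def by (rule eq4I; simp del: index_mult_mat(1) add: mult4)

lemma N1_G: "J0 * N1 * J0 \<in> Gamma_tilde"
proof -
  have "J0 * N1 * J0 = D_mat * perm_mat (Transposition.transpose 0 1 \<circ> Transposition.transpose 2 3)"
    unfolding N1_def J0_m4 by (rule eq4I; simp del: index_mult_mat(1) add: mult4 S_mat_def D_mat_def perm_mat_def Transposition.transpose_def)
  then show ?thesis by (simp add: mone_GT S0_GT DP_GT perm_GT permutes_swap_id)
qed

lemma N1_red: "U \<in> O31Z \<Longrightarrow> inG (N1 * U) \<Longrightarrow> inG U"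
  by (rule red[OF N1_O N1_sq N1_G])

lemma N1_mult: "U \<in> O31Z \<Longrightarrow> N1 * U \<in> O31Z"
  by (rule O31Z_mult[OF N1_O])

definition N2 :: "rat mat" where "N2 = m4 [[1,0,0,0],[0,1,0,0],[0,0,-1,0],[0,0,0,1]]"

lemma N2_O: "N2 \<in> O31Z"
  unfolding O31Z_iff N2_def
  by (auto intro!: intm_m4I eq4I simp del: index_mult_mat(1) simp add: mult4 QL_m4)

lemma N2_sq: "N2 * N2 = 1\<^sub>m 4"
  unfolding N2_def by (rule eq4I; simp del: index_mult_mat(1) add: mult4)

lemma N2_G: "J0 * N2 * J0 \<in> Gamma_tilde"
proof -
  have "J0 * N2 * J0 = D_mat * perm_mat (Transposition.transpose 0 2 \<circ> Transposition.transpose 1 3)"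
    unfolding N2_def J0_m4 by (rule eq4I; simp del: index_mult_mat(1) add: mult4 S_mat_def D_mat_def perm_mat_def Transposition.transpose_def)
  then show ?thesis by (simp add: mone_GT S0_GT DP_GT perm_GT permutes_swap_id)
qed

lemma N2_red: "U \<in> O31Z \<Longrightarrow> inG (N2 * U) \<Longrightarrow> inG U"
  by (rule red[OF N2_O N2_sq N2_G])

lemma N2_mult: "U \<in> O31Z \<Longrightarrow> N2 * U \<in> O31Z"
  by (rule O31Z_mult[OF N2_O])

definition N3 :: "rat mat" where "N3 = m4 [[1,0,0,0],[0,1,0,0],[0,0,1,0],[0,0,0,-1]]"

lemma N3_O: "N3 \<in> O31Z"
  unfolding O31Z_iff N3_def
  by (auto intro!: intm_m4I eq4I simp del: index_mult_mat(1) simp add: mult4 QL_m4)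

lemma N3_sq: "N3 * N3 = 1\<^sub>m 4"
  unfolding N3_def by (rule eq4I; simp del: index_mult_mat(1) add: mult4)

lemma N3_G: "J0 * N3 * J0 \<in> Gamma_tilde"
proof -
  have "J0 * N3 * J0 = D_mat * perm_mat (Transposition.transpose 0 3 \<circ> Transposition.transpose 1 2)"
    unfolding N3_def J0_m4 by (rule eq4I; simp del: index_mult_mat(1) add: mult4 S_mat_def D_mat_def perm_mat_def Transposition.transpose_def)
  then show ?thesis by (simp add: mone_GT S0_GT DP_GT perm_GT permutes_swap_id)
qed

lemma N3_red: "U \<in> O31Z \<Longrightarrow> inG (N3 * U) \<Longrightarrow> inG U"
  by (rule red[OF N3_O N3_sq N3_G])

lemma N3_mult: "U \<in> O31Z \<Longrightarrow> N3 * U \<in> O31Z"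
  by (rule O31Z_mult[OF N3_O])

definition T12 :: "rat mat" where "T12 = m4 [[1,0,0,0],[0,0,1,0],[0,1,0,0],[0,0,0,1]]"

lemma T12_O: "T12 \<in> O31Z"
  unfolding O31Z_iff T12_def
  by (auto intro!: intm_m4I eq4I simp del: index_mult_mat(1) simp add: mult4 QL_m4)

lemma T12_sq: "T12 * T12 = 1\<^sub>m 4"
  unfolding T12_def by (rule eq4I; simp del: index_mult_mat(1) add: mult4)

lemma T12_G: "J0 * T12 * J0 \<in> Gamma_tilde"
proof -
  have "J0 * T12 * J0 = perm_mat (Transposition.transpose 1 2)"
    unfolding T12_def J0_m4 by (rule eq4I; simp del: index_mult_mat(1) add: mult4 S_mat_def D_mat_def perm_mat_def Transposition.transpose_def)
  then show ?thesis by (simp add: mone_GT S0_GT DP_GT perm_GT permutes_swap_id)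
qed

lemma T12_red: "U \<in> O31Z \<Longrightarrow> inG (T12 * U) \<Longrightarrow> inG U"
  by (rule red[OF T12_O T12_sq T12_G])

lemma T12_mult: "U \<in> O31Z \<Longrightarrow> T12 * U \<in> O31Z"
  by (rule O31Z_mult[OF T12_O])

definition T13 :: "rat mat" where "T13 = m4 [[1,0,0,0],[0,0,0,1],[0,0,1,0],[0,1,0,0]]"

lemma T13_O: "T13 \<in> O31Z"
  unfolding O31Z_iff T13_def
  by (auto intro!: intm_m4I eq4I simp del: index_mult_mat(1) simp add: mult4 QL_m4)

lemma T13_sq: "T13 * T13 = 1\<^sub>m 4"
  unfolding T13_def by (rule eq4I; simp del: index_mult_mat(1) add: mult4)

lemma T13_G: "J0 * T13 * J0 \<in> Gamma_tilde"
proof -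
  have "J0 * T13 * J0 = perm_mat (Transposition.transpose 1 3)"
    unfolding T13_def J0_m4 by (rule eq4I; simp del: index_mult_mat(1) add: mult4 S_mat_def D_mat_def perm_mat_def Transposition.transpose_def)
  then show ?thesis by (simp add: mone_GT S0_GT DP_GT perm_GT permutes_swap_id)
qed

lemma T13_red: "U \<in> O31Z \<Longrightarrow> inG (T13 * U) \<Longrightarrow> inG U"
  by (rule red[OF T13_O T13_sq T13_G])

lemma T13_mult: "U \<in> O31Z \<Longrightarrow> T13 * U \<in> O31Z"
  by (rule O31Z_mult[OF T13_O])

definition T23 :: "rat mat" where "T23 = m4 [[1,0,0,0],[0,1,0,0],[0,0,0,1],[0,0,1,0]]"

lemma T23_O: "T23 \<in> O31Z"
  unfolding O31Z_iff T23_def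
  by (auto intro!: intm_m4I eq4I simp del: index_mult_mat(1) simp add: mult4 QL_m4)

lemma T23_sq: "T23 * T23 = 1\<^sub>m 4"
  unfolding T23_def by (rule eq4I; simp del: index_mult_mat(1) add: mult4)

lemma T23_G: "J0 * T23 * J0 \<in> Gamma_tilde"
proof -
  have "J0 * T23 * J0 = perm_mat (Transposition.transpose 2 3)"
    unfolding T23_def J0_m4 by (rule eq4I; simp del: index_mult_mat(1) add: mult4 S_mat_def D_mat_def perm_mat_def Transposition.transpose_def)
  then show ?thesis by (simp add: mone_GT S0_GT DP_GT perm_GT permutes_swap_id)
qed

lemma T23_red: "U \<in> O31Z \<Longrightarrow> inG (T23 * U) \<Longrightarrow> inG U"
  by (rule red[OF T23_O T23_sq T23_G])

lemma T23_mult: "U \<in> O31Z \<Longrightarrow> T23 * U \<in> O31Z"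
  by (rule O31Z_mult[OF T23_O])



lemma Oc: "U \<in> O31Z \<Longrightarrow> U \<in> carrier_mat 4 4" by (simp add: O31Z_iff)

lemma intE: "U \<in> O31Z \<Longrightarrow> i < 4 \<Longrightarrow> j < 4 \<Longrightarrow> U $$ (i,j) \<in> \<int>"
  by (simp add: O31Z_def)

lemma orthoE: "U \<in> O31Z \<Longrightarrow> i < 4 \<Longrightarrow> j < 4 \<Longrightarrow>
  - U$$(0,i)*U$$(0,j) + U$$(1,i)*U$$(1,j) + U$$(2,i)*U$$(2,j) + U$$(3,i)*U$$(3,j) =
  (if i = j then (if i = 0 then -1 else 1) else 0)"
proof -
  assume U: "U \<in> O31Z" and ij: "i < 4" "j < 4"
  have "(transpose_mat U * Q_L * U) $$ (i,j) = Q_L $$ (i,j)" using U by (simp add: O31Z_iff)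
  then show ?thesis using ortho_entry[OF Oc[OF U] ij] ij by (simp add: Q_L_def)
qed

definition std :: "nat \<Rightarrow> rat mat \<Rightarrow> bool" where
  "std m U \<longleftrightarrow> (\<forall>i<4. \<forall>j<m. U $$ (i,j) = (if i = j then 1 else 0))"

lemma stdD: "std m U \<Longrightarrow> i < 4 \<Longrightarrow> j < m \<Longrightarrow> U $$ (i,j) = (if i = j then 1 else 0)"
  by (simp add: std_def)

lemma lt1: "(j::nat) < 1 \<longleftrightarrow> j = 0" by auto
lemma lt2: "(j::nat) < 2 \<longleftrightarrow> j = 0 \<or> j = 1" by auto
lemma lt3: "(j::nat) < 3 \<longleftrightarrow> j = 0 \<or> j = 1 \<or> j = 2" by auto

lemma sq_int: fixes a b c :: int assumes "a^2 + b^2 + c^2 = 1"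
  shows "((a = 1 \<or> a = -1) \<and> b = 0 \<and> c = 0) \<or> (a = 0 \<and> (b = 1 \<or> b = -1) \<and> c = 0) \<or> (a = 0 \<and> b = 0 \<and> (c = 1 \<or> c = -1))"
proof -
  have small: "x \<in> {-1, 0, 1}" if "x^2 \<le> 1" for x :: int
  proof (rule ccontr)
    assume "x \<notin> {-1, 0, 1}"
    then have "2 \<le> \<bar>x\<bar>" by auto
    then have "2 * 2 \<le> \<bar>x\<bar> * \<bar>x\<bar>" by (intro mult_mono) auto
    then show False using that by (simp add: power2_eq_square abs_mult[symmetric])
  qed
  have "a^2 \<le> 1" "b^2 \<le> 1" "c^2 \<le> 1" using assms by (smt (verit) zero_le_power2)+
  then have "a \<in> {-1,0,1}" "b \<in> {-1,0,1}" "c \<in> {-1,0,1}" using small by auto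
  then show ?thesis using assms by auto
qed

lemma sq_rat: fixes x y z :: rat assumes "x \<in> \<int>" "y \<in> \<int>" "z \<in> \<int>" "x^2 + y^2 + z^2 = 1"
  shows "((x = 1 \<or> x = -1) \<and> y = 0 \<and> z = 0) \<or> (x = 0 \<and> (y = 1 \<or> y = -1) \<and> z = 0) \<or> (x = 0 \<and> y = 0 \<and> (z = 1 \<or> z = -1))"
proof -
  obtain a b c where abc: "x = of_int a" "y = of_int b" "z = of_int c" using assms(1-3) by (auto elim!: Ints_cases)
  have "of_int (a^2 + b^2 + c^2) = (of_int 1 :: rat)" using assms(4) abc by simp
  then have "a^2 + b^2 + c^2 = 1" using of_int_eq_iff by blast
  from sq_int[OF this] show ?thesis using abc by auto
qed

lemma stage4: assumes U: "U \<in> O31Z" and s: "std 4 U" shows "inG U"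
proof -
  have "U = 1\<^sub>m 4"
    using Oc[OF U] stdD[OF s] by (intro eq_matI) auto
  moreover have "J0 * 1\<^sub>m 4 * J0 = 1\<^sub>m 4" by (simp add: J0_sq)
  ultimately show ?thesis unfolding inG_def Gamma_tilde_def by (simp add: gen_grp.one)
qed


lemma pm1: "(x::rat)^2 = 1 \<Longrightarrow> x = 1 \<or> x = -1"
  by (simp add: power2_eq_1_iff)

lemmas msim = mult4 less4 lt1 lt2 lt3

lemma stage3: assumes U: "U \<in> O31Z" and s: "std 3 U" shows "inG U"
proof -
  have Uc: "U \<in> carrier_mat 4 4" using Oc[OF U] .
  note e = stdD[OF s]
  have z: "U$$(0,3) = 0" "U$$(1,3) = 0" "U$$(2,3) = 0"
    using orthoE[OF U, of 0 3] orthoE[OF U, of 1 3] orthoE[OF U, of 2 3] by (simp_all add: e)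
  have "U$$(3,3)^2 = 1" using orthoE[OF U, of 3 3] using z by (simp add: e power2_eq_square One_nat_def)
  then have "U$$(3,3) = 1 \<or> U$$(3,3) = -1" by (rule pm1)
  then show ?thesis
  proof
    assume "U$$(3,3) = 1" then have "std 4 U" using e z unfolding std_def by (auto simp: less4)
    then show ?thesis using stage4 U by blast
  next
    assume m: "U$$(3,3) = -1"
    have "std 4 (N3 * U)" unfolding std_def N3_def using e z m Uc
      by (auto simp del: index_mult_mat(1) simp add: msim)
    then show ?thesis using stage4 N3_mult N3_red U by blast
  qed
qed

lemma fix2: assumes U: "U \<in> O31Z" and s: "std 2 U" and a: "U$$(2,2) = 1 \<or> U$$(2,2) = -1" and b: "U$$(3,2) = 0"
  shows "inG U"
proof -
  have Uc: "U \<in> carrier_mat 4 4" using Oc[OF U] .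
  note e = stdD[OF s]
  have z: "U$$(0,2) = 0" "U$$(1,2) = 0"
    using orthoE[OF U, of 0 2] orthoE[OF U, of 1 2] by (simp_all add: e)
  from a show ?thesis
  proof
    assume "U$$(2,2) = 1" then have "std 3 U" using e z b unfolding std_def by (auto simp: less4 lt3)
    then show ?thesis using stage3 U by blast
  next
    assume m: "U$$(2,2) = -1"
    have "std 3 (N2 * U)" unfolding std_def N2_def using e z m b Uc
      by (auto simp del: index_mult_mat(1) simp add: msim)
    then show ?thesis using stage3 N2_mult N2_red U by blast
  qed
qed

lemma stage2: assumes U: "U \<in> O31Z" and s: "std 2 U" shows "inG U"
proof -
  have Uc: "U \<in> carrier_mat 4 4" using Oc[OF U] .
  note e = stdD[OF s]
  have z: "U$$(0,2) = 0" "U$$(1,2) = 0"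
    using orthoE[OF U, of 0 2] orthoE[OF U, of 1 2] by (simp_all add: e)
  have "U$$(2,2)^2 + U$$(3,2)^2 + 0^2 = 1" using orthoE[OF U, of 2 2] using z by (simp add: e power2_eq_square One_nat_def)
  from sq_rat[OF intE[OF U] intE[OF U] _ this]
  have "((U$$(2,2) = 1 \<or> U$$(2,2) = -1) \<and> U$$(3,2) = 0) \<or> (U$$(2,2) = 0 \<and> (U$$(3,2) = 1 \<or> U$$(3,2) = -1))"
    by auto
  then show ?thesis
  proof
    assume "(U$$(2,2) = 1 \<or> U$$(2,2) = -1) \<and> U$$(3,2) = 0"
    then show ?thesis using fix2[OF U s] by blast
  next
    assume c: "U$$(2,2) = 0 \<and> (U$$(3,2) = 1 \<or> U$$(3,2) = -1)"
    let ?W = "T23 * U"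
    have "std 2 ?W" unfolding std_def T23_def using e z c Uc
      by (auto simp del: index_mult_mat(1) simp add: msim)
    moreover have "?W$$(2,2) = 1 \<or> ?W$$(2,2) = -1" "?W$$(3,2) = 0" unfolding T23_def using c Uc
      by (auto simp del: index_mult_mat(1) simp add: msim)
    ultimately have "inG ?W" using fix2 T23_mult[OF U] by blast
    then show ?thesis using T23_red U by blast
  qed
qed

lemma fix1: assumes U: "U \<in> O31Z" and s: "std 1 U" and a: "U$$(1,1) = 1 \<or> U$$(1,1) = -1"
  and b: "U$$(2,1) = 0" "U$$(3,1) = 0"
  shows "inG U"
proof -
  have Uc: "U \<in> carrier_mat 4 4" using Oc[OF U] .
  note e = stdD[OF s]
  have z: "U$$(0,1) = 0"
    using orthoE[OF U, of 0 1] by (simp_all add: e)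
  from a show ?thesis
  proof
    assume "U$$(1,1) = 1" then have "std 2 U" using e z b unfolding std_def by (auto simp: less4 lt2)
    then show ?thesis using stage2 U by blast
  next
    assume m: "U$$(1,1) = -1"
    have "std 2 (N1 * U)" unfolding std_def N1_def using e z m b Uc
      by (auto simp del: index_mult_mat(1) simp add: msim)
    then show ?thesis using stage2 N1_mult N1_red U by blast
  qed
qed

lemma stage1: assumes U: "U \<in> O31Z" and s: "std 1 U" shows "inG U"
proof -
  have Uc: "U \<in> carrier_mat 4 4" using Oc[OF U] .
  note e = stdD[OF s]
  have z: "U$$(0,1) = 0"
    using orthoE[OF U, of 0 1] by (simp_all add: e)
  have "U$$(1,1)^2 + U$$(2,1)^2 + U$$(3,1)^2 = 1" using orthoE[OF U, of 1 1] using z by (simp add: e power2_eq_square One_nat_def)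
  from sq_rat[OF intE[OF U] intE[OF U] intE[OF U] this]
  consider "(U$$(1,1) = 1 \<or> U$$(1,1) = -1) \<and> U$$(2,1) = 0 \<and> U$$(3,1) = 0"
    | "U$$(1,1) = 0 \<and> (U$$(2,1) = 1 \<or> U$$(2,1) = -1) \<and> U$$(3,1) = 0"
    | "U$$(1,1) = 0 \<and> U$$(2,1) = 0 \<and> (U$$(3,1) = 1 \<or> U$$(3,1) = -1)"
    by auto
  then show ?thesis
  proof cases
    case 1
    then show ?thesis using fix1[OF U s] by blast
  next
    case c: 2
    let ?W = "T12 * U"
    have "std 1 ?W" unfolding std_def T12_def using e z c Uc
      by (auto simp del: index_mult_mat(1) simp add: msim)
    moreover have "?W$$(1,1) = 1 \<or> ?W$$(1,1) = -1" "?W$$(2,1) = 0" "?W$$(3,1) = 0" unfolding T12_def using c Uc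
      by (auto simp del: index_mult_mat(1) simp add: msim)
    ultimately have "inG ?W" using fix1 T12_mult[OF U] by blast
    then show ?thesis using T12_red U by blast
  next
    case c: 3
    let ?W = "T13 * U"
    have "std 1 ?W" unfolding std_def T13_def using e z c Uc
      by (auto simp del: index_mult_mat(1) simp add: msim)
    moreover have "?W$$(1,1) = 1 \<or> ?W$$(1,1) = -1" "?W$$(2,1) = 0" "?W$$(3,1) = 0" unfolding T13_def using c Uc
      by (auto simp del: index_mult_mat(1) simp add: msim)
    ultimately have "inG ?W" using fix1 T13_mult[OF U] by blast
    then show ?thesis using T13_red U by blast
  qed
qed


lemma key: fixes b0 b1 b2 b3 :: int
  assumes b0: "b0 > 1" and nn: "b1 \<ge> 0" "b2 \<ge> 0" "b3 \<ge> 0" and eq: "b0^2 = 1 + b1^2 + b2^2 + b3^2"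
  shows "\<bar>2*b0 - b1 - b2 - b3\<bar> < b0"
proof -
  define s where "s = b1 + b2 + b3"
  define c where "c = b1*b2 + b1*b3 + b2*b3"
  have s0: "s \<ge> 0" using nn s_def by simp
  have c0: "c \<ge> 0" unfolding c_def using nn by (intro add_nonneg_nonneg mult_nonneg_nonneg) auto
  have ss0: "s^2 = b1^2 + b2^2 + b3^2 + 2*c" by (simp add: s_def c_def power2_eq_square algebra_simps)
  have ss: "s^2 = b0^2 - 1 + 2*c" using ss0 eq by simp
  have up: "s < 3*b0"
  proof -
    have "3*(b1^2+b2^2+b3^2) - s^2 = (b1-b2)^2 + (b1-b3)^2 + (b2-b3)^2"
      by (simp add: s_def power2_eq_square algebra_simps)
    moreover have "0 \<le> (b1-b2)^2 + (b1-b3)^2 + (b2-b3)^2" by simp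
    ultimately have "s^2 \<le> 3*(b1^2+b2^2+b3^2)" by linarith
    moreover have "(3*b0)^2 = 9 * b0^2" by (simp add: power_mult_distrib)
    moreover have "b0^2 \<ge> 0" by simp
    moreover have "b1^2+b2^2+b3^2 = b0^2 - 1" using eq by simp
    ultimately have "s^2 < (3*b0)^2" by (smt (verit))
    then show ?thesis using power2_less_imp_less b0 by fastforce
  qed
  have low: "b0 < s"
  proof (rule ccontr)
    assume "\<not> b0 < s" then have sb: "s \<le> b0" by simp
    then have "s^2 \<le> b0^2" using s0 by (simp add: power_mono)
    then have "c = 0" using ss c0 by linarith
    then have s2: "s^2 = b0^2 - 1" using ss by simp
    then have "s \<noteq> b0" by auto
    then have "s \<le> b0 - 1" using sb by simp
    then have "s^2 \<le> (b0 - 1)^2" using s0 by (simp add: power_mono)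
    moreover have "(b0 - 1)^2 = b0^2 - 2*b0 + 1" by (simp add: power2_eq_square algebra_simps)
    ultimately show False using s2 b0 by linarith
  qed
  show ?thesis using up low s_def by arith
qed

lemma normalize: assumes U: "U \<in> O31Z"
  shows "\<exists>V. V \<in> O31Z \<and> (inG V \<longrightarrow> inG U) \<and> V$$(0,0) = \<bar>U$$(0,0)\<bar> \<and> V$$(1,0) \<ge> 0 \<and> V$$(2,0) \<ge> 0 \<and> V$$(3,0) \<ge> 0"
proof -
  obtain V0 where V0: "V0 \<in> O31Z" "inG V0 \<longrightarrow> inG U" "V0$$(0,0) = \<bar>U$$(0,0)\<bar>"
  proof (cases "U$$(0,0) \<ge> 0")
    case True then show ?thesis using that[of U] U by simp
  next
    case False
    have "(negL*U)$$(0,0) = - U$$(0,0)" unfolding negL_def using Oc[OF U] by (simp del: index_mult_mat(1) add: mult4)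
    then show ?thesis using that[of "negL*U"] negL_mult[OF U] negL_red[OF U] False by auto
  qed
  obtain V1 where V1: "V1 \<in> O31Z" "inG V1 \<longrightarrow> inG V0" "V1$$(1,0) \<ge> 0" "V1$$(0,0) = V0$$(0,0)"
  proof (cases "V0$$(1,0) \<ge> 0")
    case True then show ?thesis using that[of V0] V0 by simp
  next
    case False
    have "(N1*V0)$$(1,0) = - V0$$(1,0)" "(N1*V0)$$(0,0) = V0$$(0,0)"
      unfolding N1_def using Oc[OF V0(1)] by (simp_all del: index_mult_mat(1) add: mult4)
    then show ?thesis using that[of "N1*V0"] N1_mult[OF V0(1)] N1_red[OF V0(1)] False by auto
  qed
  obtain V2 where V2: "V2 \<in> O31Z" "inG V2 \<longrightarrow> inG V1" "V2$$(2,0) \<ge> 0" "V2$$(0,0) = V1$$(0,0)" "V2$$(1,0) = V1$$(1,0)"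
  proof (cases "V1$$(2,0) \<ge> 0")
    case True then show ?thesis using that[of V1] V1 by simp
  next
    case False
    have "(N2*V1)$$(2,0) = - V1$$(2,0)" "(N2*V1)$$(0,0) = V1$$(0,0)" "(N2*V1)$$(1,0) = V1$$(1,0)"
      unfolding N2_def using Oc[OF V1(1)] by (simp_all del: index_mult_mat(1) add: mult4)
    then show ?thesis using that[of "N2*V1"] N2_mult[OF V1(1)] N2_red[OF V1(1)] False by auto
  qed
  obtain V3 where V3: "V3 \<in> O31Z" "inG V3 \<longrightarrow> inG V2" "V3$$(3,0) \<ge> 0" "V3$$(0,0) = V2$$(0,0)" "V3$$(1,0) = V2$$(1,0)" "V3$$(2,0) = V2$$(2,0)"
  proof (cases "V2$$(3,0) \<ge> 0")
    case True then show ?thesis using that[of V2] V2 by simp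
  next
    case False
    have "(N3*V2)$$(3,0) = - V2$$(3,0)" "(N3*V2)$$(0,0) = V2$$(0,0)" "(N3*V2)$$(1,0) = V2$$(1,0)" "(N3*V2)$$(2,0) = V2$$(2,0)"
      unfolding N3_def using Oc[OF V2(1)] by (simp_all del: index_mult_mat(1) add: mult4)
    then show ?thesis using that[of "N3*V2"] N3_mult[OF V2(1)] N3_red[OF V2(1)] False by auto
  qed
  show ?thesis using V0 V1 V2 V3 by (intro exI[of _ V3]) auto
qed

lemma descent: "U \<in> O31Z \<Longrightarrow> inG U"
proof (induction "nat \<lfloor>\<bar>U$$(0,0)\<bar>\<rfloor>" arbitrary: U rule: less_induct)
  case (less U)
  obtain V where V: "V \<in> O31Z" "inG V \<longrightarrow> inG U" "V$$(0,0) = \<bar>U$$(0,0)\<bar>" "V$$(1,0) \<ge> 0" "V$$(2,0) \<ge> 0" "V$$(3,0) \<ge> 0"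
    using normalize[OF less.prems] by blast
  obtain b0 where b0: "V$$(0,0) = of_int b0" using intE[OF V(1), of 0 0] by (auto elim: Ints_cases)
  obtain b1 where b1: "V$$(1,0) = of_int b1" using intE[OF V(1), of 1 0] by (auto elim: Ints_cases)
  obtain b2 where b2: "V$$(2,0) = of_int b2" using intE[OF V(1), of 2 0] by (auto elim: Ints_cases)
  obtain b3 where b3: "V$$(3,0) = of_int b3" using intE[OF V(1), of 3 0] by (auto elim: Ints_cases)
  have nn: "b0 \<ge> 0" "b1 \<ge> 0" "b2 \<ge> 0" "b3 \<ge> 0" using V b0 b1 b2 b3 by auto
  have "(of_int b0::rat) * of_int b0 = 1 + of_int b1 * of_int b1 + of_int b2 * of_int b2 + of_int b3 * of_int b3"
    using orthoE[OF V(1), of 0 0] b0 b1 b2 b3 by (simp add: One_nat_def)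
  then have "of_int (b0 * b0) = (of_int (1 + b1 * b1 + b2 * b2 + b3 * b3) :: rat)" by simp
  then have "b0 * b0 = 1 + b1 * b1 + b2 * b2 + b3 * b3" using of_int_eq_iff by blast
  then have eq: "b0^2 = 1 + b1^2 + b2^2 + b3^2" by (simp add: power2_eq_square)
  have sq: "b1^2 \<ge> 0" "b2^2 \<ge> 0" "b3^2 \<ge> 0" by simp_all
  have U00: "nat \<lfloor>\<bar>U$$(0,0)\<bar>\<rfloor> = nat b0" using V(3) b0 by (metis floor_of_int)
  show ?case
  proof (cases "b0 = 1")
    case True
    then have "b1^2 + b2^2 + b3^2 = 0" using eq by simp
    then have "b1^2 = 0 \<and> b2^2 = 0 \<and> b3^2 = 0" using sq by (smt (verit))
    then have "b1 = 0 \<and> b2 = 0 \<and> b3 = 0" by simp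
    then have "std 1 V" unfolding std_def using b0 b1 b2 b3 True by (auto simp: less4 lt1)
    then show ?thesis using stage1 V by blast
  next
    case False
    have "b0 \<noteq> 0"
    proof
      assume "b0 = 0"
      then have "1 + b1^2 + b2^2 + b3^2 = 0" using eq by simp
      then show False using sq by (smt (verit))
    qed
    then have b0g: "b0 > 1" using False nn by simp
    have k: "\<bar>2*b0 - b1 - b2 - b3\<bar> < b0" using key[OF b0g nn(2-4) eq] .
    let ?W = "RL * V"
    have W: "?W \<in> O31Z" using RL_mult[OF V(1)] .
    have "?W$$(0,0) = 2 * V$$(0,0) - V$$(1,0) - V$$(2,0) - V$$(3,0)"
      unfolding RL_def using Oc[OF V(1)] by (simp del: index_mult_mat(1) add: mult4 One_nat_def)
    then have "?W$$(0,0) = of_int (2*b0 - b1 - b2 - b3)" using b0 b1 b2 b3 by simp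
    then have "\<bar>?W$$(0,0)\<bar> = of_int \<bar>2*b0 - b1 - b2 - b3\<bar>" by simp
    then have "nat \<lfloor>\<bar>?W$$(0,0)\<bar>\<rfloor> = nat \<bar>2*b0 - b1 - b2 - b3\<bar>" by (metis floor_of_int)
    also have "\<dots> < nat b0" using k by simp
    finally have "nat \<lfloor>\<bar>?W$$(0,0)\<bar>\<rfloor> < nat \<lfloor>\<bar>U$$(0,0)\<bar>\<rfloor>" using U00 by simp
    then have "inG ?W" using less.hyps W by blast
    then have "inG V" using RL_red V(1) by blast
    then show ?thesis using V(2) by blast
  qed
qed

lemma sub2: "Tset \<subseteq> Gamma_tilde"
  unfolding Tset_def using descent unfolding inG_def by blast

theorem lemma7p5:
  shows "Gamma_tilde = {J0 * U * J0_inv | U. U \<in> O31Z}"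
  unfolding J0_inv_eq using sub1 sub2 unfolding Tset_def by blast

end
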